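(* Let $v_0\ge 1$ be an integer and let $f=1+\sum_{v\ge v_0}p_vx^v\in K[[x]]$ with $p_{v_0}=1$. Define the coefficients $\mathfrak p_{uv}^w\in K$ ($u,v,w\in\mathbb N_0$) as follows. Put $g=\dfrac{f\,(f^{v_0}-1)}{f'}\in K[[x]]$. Let $G=\sum_{v\ge 0}g_v(x)y^v\in K[[x]][[y]]$ be the unique series with $g_0=x$ satisfying $$G_y(x,y)=g(x)f'(y)G_x(x,y)-\bigl(f(y)-1\bigr)G_y(x,y).$$ Set $\mathfrak p_{uv}^0=\delta_{0,u+v}$, let $\mathfrak p_{uv}^1$ be the coefficient of $x^uy^v$ in $G$, and for $w>1$ set recursively $\mathfrak p_{uv}^w=\sum_{u_1+u_2=u,\ v_1+v_2=v}\mathfrak p_{u_1v_1}^1\mathfrak p_{u_2v_2}^{w-1}$. Then for all $i,j,k\in\mathbb N_0$, $$\sum_{a+b=j}\sum_{h=0}^i\sum_{l=0}^k \mathfrak p_{ia}^h\mathfrak p_{kb}^l\mathfrak p_{hl}^1=\sum_{c+d=k}\sum_{h=0}^i\sum_{l=0}^j \mathfrak p_{ic}^h\mathfrak p_{jd}^l\mathfrak p_{hl}^1,$$ where the sums over $a+b=j$ and $c+d=k$ run over pairs of nonnegative integers.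
   Context: $K$ is an algebraically closed field of characteristic $0$. $K[[x]]$ and $K[[x]][[y]]=K[[x,y]]$ are formal power series rings; $f'$ is the formal derivative of $f$, and $G_x,G_y$ are the formal partial derivatives of $G$. Since $f'$ has order $v_0-1$ and $f(f^{v_0}-1)$ has order $v_0$, $g$ is a well-defined power series lying in $x+x^2K[[x]]$; comparing coefficients of $y^v$ in the displayed differential equation determines the $g_v$ recursively from $g_0=x$, so $G$ is well defined. *)

theory Defs
  imports "HOL-Computational_Algebra.Computational_Algebra"
begin

text \<open>Series in K[[x]][[y]] are represented as ''a fps fps: the outer variable is y,
  the inner variable is x. So (G $ v) $ u is the coefficient of x^u y^v.\<close>

definition fps_in_y :: "'a::comm_ring_1 fps \<Rightarrow> 'a fps fps" where
  "fps_in_y f = Abs_fps (\<lambda>v. fps_const (f $ v))"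

definition fps_deriv_x :: "'a::comm_ring_1 fps fps \<Rightarrow> 'a fps fps" where
  "fps_deriv_x G = Abs_fps (\<lambda>v. fps_deriv (G $ v))"

text \<open>g = f (f^v0 - 1) / f'  (exact division in K[[x]]).\<close>
definition g_series :: "nat \<Rightarrow> 'a::field fps \<Rightarrow> 'a fps" where
  "g_series v0 f = (f * (f ^ v0 - 1)) div fps_deriv f"

definition is_G :: "nat \<Rightarrow> 'a::field fps \<Rightarrow> 'a fps fps \<Rightarrow> bool" where
  "is_G v0 f G \<longleftrightarrow> G $ 0 = fps_X \<and>
     fps_deriv G = fps_const (g_series v0 f) * fps_in_y (fps_deriv f) * fps_deriv_x G
                   - (fps_in_y f - 1) * fps_deriv G"

text \<open>The coefficients p_{uv}^w: pfrak G w u v.\<close>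
fun pfrak :: "'a::comm_ring_1 fps fps \<Rightarrow> nat \<Rightarrow> nat \<Rightarrow> nat \<Rightarrow> 'a" where
  "pfrak G 0 u v = (if u + v = 0 then 1 else 0)"
| "pfrak G (Suc 0) u v = (G $ v) $ u"
| "pfrak G (Suc (Suc w)) u v =
     (\<Sum>u1\<le>u. \<Sum>v1\<le>v. pfrak G (Suc 0) u1 v1 * pfrak G (Suc w) (u - u1) (v - v1))"

end

theory Submission
  imports Defs
begin


lemma fps_const_sum: "fps_const (sum f S) = (\<Sum>i\<in>S. fps_const (f i))"
  by (induction S rule: infinite_finite_induct) (auto simp flip: fps_const_add)

lemma fps_in_y_nth [simp]: "fps_in_y a $ n = fps_const (a $ n)"
  by (simp add: fps_in_y_def)

lemma fps_in_y_mult: "fps_in_y (a * b) = fps_in_y a * fps_in_y b"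
  by (simp add: fps_eq_iff fps_mult_nth fps_const_sum)

lemma fps_in_y_add: "fps_in_y (a + b) = fps_in_y a + fps_in_y b"
  by (simp add: fps_eq_iff)

lemma fps_in_y_diff: "fps_in_y (a - b) = fps_in_y a - fps_in_y b"
  by (simp add: fps_eq_iff)

lemma fps_in_y_1: "fps_in_y 1 = 1"
  by (simp add: fps_eq_iff)

lemma fps_in_y_power: "fps_in_y (a ^ n) = fps_in_y a ^ n"
  by (induction n) (simp_all add: fps_in_y_1 fps_in_y_mult)

lemma fps_in_y_deriv: "fps_deriv (fps_in_y a) = fps_in_y (fps_deriv a)"
  by (simp add: fps_eq_iff fps_of_nat[symmetric])

lemma fps_in_y_ofnat: "fps_in_y (of_nat n) = of_nat n"
  by (simp add: fps_eq_iff fps_of_nat[symmetric])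

lemma fps_in_y_uminus: "fps_in_y (- a) = - fps_in_y a"
  by (simp add: fps_eq_iff)

lemma dx_nth [simp]: "fps_deriv_x G $ n = fps_deriv (G $ n)"
  by (simp add: fps_deriv_x_def)

lemma dx_add: "fps_deriv_x (A + B) = fps_deriv_x A + fps_deriv_x B"
  by (simp add: fps_eq_iff)

lemma dx_diff: "fps_deriv_x (A - B) = fps_deriv_x A - fps_deriv_x B"
  by (simp add: fps_eq_iff)

lemma dx_mult: "fps_deriv_x (A * B) = fps_deriv_x A * B + A * fps_deriv_x B"
  by (simp add: fps_eq_iff fps_mult_nth fps_deriv_sum sum.distrib)

lemma dx_const: "fps_deriv_x (fps_const c) = fps_const (fps_deriv c)"
  by (simp add: fps_eq_iff)

lemma dx_in_y: "fps_deriv_x (fps_in_y a) = 0"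
  by (simp add: fps_eq_iff)

lemma dx_ofnat: "fps_deriv_x (of_nat n) = 0"
  by (simp add: fps_eq_iff fps_of_nat[symmetric])

lemma dx_X: "fps_deriv_x (fps_X :: 'a::comm_ring_1 fps fps) = 0"
  by (simp add: fps_eq_iff)

lemma dx_compose_in_y:
  fixes A :: "'a::idom fps fps"
  shows "fps_deriv_x (A oo fps_in_y b) = fps_deriv_x A oo fps_in_y b"
  by (simp add: fps_eq_iff fps_compose_nth fps_deriv_sum fps_in_y_power[symmetric])

lemma xpow_dvd_iff: "(fps_X ^ n dvd (p :: 'a::idom fps)) \<longleftrightarrow> (\<forall>t<n. p $ t = 0)"
proof
  assume "fps_X ^ n dvd p"
  then obtain q where "p = fps_X ^ n * q" by (auto elim: dvdE)
  then show "\<forall>t<n. p $ t = 0" by (simp add: fps_X_power_mult_nth)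
next
  assume H: "\<forall>t<n. p $ t = 0"
  show "fps_X ^ n dvd p"
  proof (cases "p = 0")
    case False
    then have "n \<le> subdegree p" using H by (intro subdegree_geI) auto
    then have "fps_shift n p * fps_X ^ n = p" by (rule fps_shift_times_fps_X_power)
    then show ?thesis by (metis dvd_triv_right)
  qed simp
qed



definition tpde :: "nat \<Rightarrow> 'a::comm_ring_1 fps \<Rightarrow> 'a fps fps \<Rightarrow> bool" where
  "tpde v0 g Z \<longleftrightarrow> fps_const g * fps_deriv_x Z + of_nat v0 * ((1 + fps_X) * fps_deriv Z) = 0"

lemma onepX_deriv_nth:
  "((1 + fps_X) * fps_deriv (Z :: 'a::comm_ring_1 fps)) $ n = of_nat (Suc n) * Z $ Suc n + of_nat n * Z $ n"
  by (cases n) (simp_all add: distrib_right algebra_simps)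

lemma ofnat_mult_nth: "(of_nat k * (W :: 'a::comm_ring_1 fps)) $ n = of_nat k * W $ n"
  by (simp add: fps_of_nat[symmetric])

lemma tpde_coeff:
  "tpde v0 g Z \<longleftrightarrow> (\<forall>n. g * fps_deriv (Z $ n) + of_nat v0 * (of_nat (Suc n) * Z $ Suc n + of_nat n * Z $ n) = 0)"
  unfolding tpde_def fps_eq_iff
  by (simp add: onepX_deriv_nth ofnat_mult_nth del: of_nat_Suc)

fun cu :: "nat \<Rightarrow> 'a::field_char_0 fps \<Rightarrow> 'a fps \<Rightarrow> nat \<Rightarrow> 'a fps" where
  "cu v0 g u 0 = u"
| "cu v0 g u (Suc n) = fps_const (- 1 / (of_nat v0 * of_nat (Suc n))) *
      (g * fps_deriv (cu v0 g u n) + of_nat (v0 * n) * cu v0 g u n)"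

definition Cu :: "nat \<Rightarrow> 'a::field_char_0 fps \<Rightarrow> 'a fps \<Rightarrow> 'a fps fps" where
  "Cu v0 g u = Abs_fps (cu v0 g u)"

lemma Cu_nth [simp]: "Cu v0 g u $ n = cu v0 g u n"
  by (simp add: Cu_def)

lemma step_equiv:
  fixes a b :: "'a::field_char_0 fps"
  assumes "v0 > 0"
  shows "(a + of_nat v0 * (of_nat (Suc n) * b + of_nat n * c) = 0) \<longleftrightarrow>
         b = fps_const (- 1 / (of_nat v0 * of_nat (Suc n))) * (a + of_nat (v0 * n) * c)"
proof -
  define k :: 'a where "k = of_nat v0 * of_nat (Suc n)"
  have k0: "k \<noteq> 0" using assms unfolding k_def by (simp del: of_nat_Suc)
  define s where "s = a + of_nat (v0 * n) * c"
  have e1: "a + of_nat v0 * (of_nat (Suc n) * b + of_nat n * c) = fps_const k * b + s"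
    unfolding k_def s_def by (simp add: fps_of_nat[symmetric] algebra_simps del: of_nat_Suc)
  have inv: "fps_const (-1/k) * fps_const k = -1" using k0 by simp
  have inv2: "fps_const k * fps_const (-1/k) = -1" using k0 by simp
  have "fps_const k * b + s = 0 \<longleftrightarrow> b = fps_const (-1/k) * s"
  proof
    assume h: "fps_const k * b + s = 0"
    then have "s = - (fps_const k * b)" by (simp add: eq_neg_iff_add_eq_0 add.commute)
    then have "fps_const (-1/k) * s = - ((fps_const (-1/k) * fps_const k) * b)" by (simp add: mult.assoc)
    then have "fps_const (-1/k) * s = - ((-1) * b)" by (simp only: inv)
    then show "b = fps_const (-1/k) * s" by simp
  next
    assume h: "b = fps_const (-1/k) * s"
    then have "fps_const k * b = (fps_const k * fps_const (-1/k)) * s" by (simp add: mult.assoc)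
    then have "fps_const k * b = (-1) * s" by (simp only: inv2)
    then show "fps_const k * b + s = 0" by simp
  qed
  then show ?thesis unfolding e1 s_def k_def .
qed

lemma tpde_Cu: "v0 > 0 \<Longrightarrow> tpde v0 g (Cu v0 g u)"
  unfolding tpde_coeff by (simp only: Cu_nth step_equiv) simp

lemma tpde_unique:
  assumes "v0 > 0" "tpde v0 g Z"
  shows "Z = Cu v0 g (Z $ 0)"
proof -
  have "Z $ n = cu v0 g (Z $ 0) n" for n
  proof (induction n)
    case (Suc n)
    from assms(2) have "g * fps_deriv (Z $ n) + of_nat v0 * (of_nat (Suc n) * Z $ Suc n + of_nat n * Z $ n) = 0"
      unfolding tpde_coeff by blast
    then show ?case using Suc by (simp only: step_equiv[OF assms(1)]) simp
  qed simp
  then show ?thesis by (simp add: fps_eq_iff)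
qed

lemma ring_aux2:
  fixes g :: "'a::comm_ring_1"
  shows "g*(a+b) + v*(p*(c+d)) = (g*a+v*(p*c)) + (g*b + v*(p*d))"
  by (simp add: algebra_simps)

lemma tpde_add: "tpde v0 g A \<Longrightarrow> tpde v0 g B \<Longrightarrow> tpde v0 g (A + B)"
  unfolding tpde_def dx_add fps_deriv_add ring_aux2 by simp

lemma ring_aux1:
  fixes g :: "'a::comm_ring_1"
  shows "g*(a*B + A*b) + v*(p*(A*d + c*B)) = (g*a + v*(p*c))*B + A*(g*b+v*(p*d))"
  by (simp add: algebra_simps)

lemma tpde_mult:
  assumes "tpde v0 g A" "tpde v0 g B" shows "tpde v0 g (A * B)"
proof -
  have "fps_const g * fps_deriv_x (A * B) + of_nat v0 * ((1 + fps_X) * fps_deriv (A * B))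
     = (fps_const g * fps_deriv_x A + of_nat v0 * ((1 + fps_X) * fps_deriv A)) * B
       + A * (fps_const g * fps_deriv_x B + of_nat v0 * ((1 + fps_X) * fps_deriv B))"
    unfolding dx_mult fps_deriv_mult by (rule ring_aux1)
  then show ?thesis using assms unfolding tpde_def by simp
qed

lemma tpde_const: "tpde v0 g (fps_const (fps_const a))"
  unfolding tpde_def by (simp add: dx_const)

lemma Cu_add: "v0 > 0 \<Longrightarrow> Cu v0 g (u + w) = Cu v0 g u + Cu v0 g w"
proof -
  assume v: "v0 > 0"
  have "tpde v0 g (Cu v0 g u + Cu v0 g w)" by (intro tpde_add tpde_Cu v)
  from tpde_unique[OF v this] show ?thesis by simp
qed

lemma Cu_mult: "v0 > 0 \<Longrightarrow> Cu v0 g (u * w) = Cu v0 g u * Cu v0 g w"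
proof -
  assume v: "v0 > 0"
  have "tpde v0 g (Cu v0 g u * Cu v0 g w)" by (intro tpde_mult tpde_Cu v)
  from tpde_unique[OF v this] show ?thesis by simp
qed

lemma Cu_const: "v0 > 0 \<Longrightarrow> Cu v0 g (fps_const a) = fps_const (fps_const a)"
proof -
  assume v: "v0 > 0"
  from tpde_unique[OF v tpde_const[of v0 g a]] show ?thesis by simp
qed

lemma Cu_1: "v0 > 0 \<Longrightarrow> Cu v0 g 1 = 1"
  using Cu_const[of v0 g 1] by simp

lemma Cu_0: "v0 > 0 \<Longrightarrow> Cu v0 g 0 = 0"
  using Cu_const[of v0 g 0] by simp

lemma Cu_power: "v0 > 0 \<Longrightarrow> Cu v0 g (u ^ n) = Cu v0 g u ^ n"
  by (induction n) (simp_all add: Cu_1 Cu_mult)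

lemma Cu_sum: "v0 > 0 \<Longrightarrow> Cu v0 g (sum h S) = (\<Sum>i\<in>S. Cu v0 g (h i))"
  by (induction S rule: infinite_finite_induct) (simp_all add: Cu_0 Cu_add)



locale Gset =
  fixes v0 :: nat and f :: "'a::field_char_0 fps"
  assumes v0: "v0 \<ge> 1" and f0: "f $ 0 = 1"
    and fz: "\<And>n. 0 < n \<Longrightarrow> n < v0 \<Longrightarrow> f $ n = 0" and fv: "f $ v0 = 1"
begin

definition g where "g = g_series v0 f"
definition FF where "FF = inverse (f ^ v0)"

lemma v0pos: "v0 > 0" using v0 by simp

lemma deriv_f_nth: "fps_deriv f $ (v0 - 1) = of_nat v0"
  using v0 fv by simp

lemma deriv_f_zero: "i < v0 - 1 \<Longrightarrow> fps_deriv f $ i = 0"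
  using fz[of "i+1"] by simp

lemma deriv_f_ne0: "fps_deriv f \<noteq> 0"
proof -
  have "fps_deriv f $ (v0 - 1) \<noteq> 0" unfolding deriv_f_nth using v0 by simp
  then show ?thesis by (metis fps_zero_nth)
qed

lemma subdeg_deriv_f: "subdegree (fps_deriv f) = v0 - 1"
  using deriv_f_nth deriv_f_zero v0 by (intro subdegreeI) auto

lemma h_dvd: "fps_X ^ v0 dvd f * (f ^ v0 - 1)"
proof -
  have "fps_X ^ v0 dvd (f - 1)"
    unfolding xpow_dvd_iff using f0 fz by (auto simp: less_Suc_eq_0_disj)
  then have "fps_X ^ v0 dvd (f - 1) * (\<Sum>i<v0. f ^ i)" by simp
  then have "fps_X ^ v0 dvd f ^ v0 - 1" by (simp add: power_diff_1_eq)
  then show ?thesis by simp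
qed

lemma g_mult: "g * fps_deriv f = f * (f ^ v0 - 1)"
proof -
  have dv: "fps_deriv f dvd f * (f ^ v0 - 1)"
  proof (cases "f * (f ^ v0 - 1) = 0")
    case False
    have "\<forall>t<v0. (f * (f ^ v0 - 1)) $ t = 0" using h_dvd xpow_dvd_iff by blast
    then have "v0 \<le> subdegree (f * (f ^ v0 - 1))" using False by (intro subdegree_geI) auto
    then show ?thesis using False deriv_f_ne0 subdeg_deriv_f by (subst fps_dvd_iff) auto
  next
    case True then show ?thesis by (metis dvd_0_right)
  qed
  show ?thesis unfolding g_def g_series_def using dv by simp
qed

lemma g0: "g $ 0 = 0"
proof -
  have "(g * fps_deriv f) $ (v0 - 1) = (\<Sum>i=0..(v0-1) - subdegree (fps_deriv f). g $ i * fps_deriv f $ ((v0-1) - i))"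
    by (rule fps_mult_nth_conv_upto_subdegree_right)
  also have "\<dots> = g $ 0 * of_nat v0" using subdeg_deriv_f deriv_f_nth by simp
  finally have e: "(g * fps_deriv f) $ (v0 - 1) = g $ 0 * of_nat v0" .
  have "(f * (f ^ v0 - 1)) $ (v0 - 1) = 0" using h_dvd xpow_dvd_iff v0 by (metis diff_less zero_less_one less_le_trans)
  then show ?thesis using e g_mult v0 by simp
qed

lemma fpow0: "(f ^ v0) $ 0 = 1" using f0 by (simp add: fps_power_zeroth)

lemma FF0: "FF $ 0 = 1" unfolding FF_def using fpow0 by simp

lemma FF_mult: "FF * f ^ v0 = 1" unfolding FF_def using fpow0 by (intro inverse_mult_eq_1) simp

lemma FF_deriv: "fps_deriv FF = - (of_nat v0 * fps_deriv f * f ^ (v0 - 1)) * FF ^ 2"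
  unfolding FF_def using fpow0 by (simp add: fps_inverse_deriv fps_deriv_power')

lemma fpow_split: "f ^ (v0 - 1) * f = f ^ v0"
  using v0 by (metis Suc_diff_1 less_le_trans zero_less_one power_Suc2)

lemma f_FF_deriv: "f * fps_deriv FF = - (of_nat v0 * FF * fps_deriv f)"
proof -
  have "f * fps_deriv FF = - (of_nat v0 * fps_deriv f * (f ^ (v0 - 1) * f) * FF) * FF"
    unfolding FF_deriv by (simp add: power2_eq_square algebra_simps)
  also have "\<dots> = - (of_nat v0 * fps_deriv f * (FF * f ^ v0)) * FF"
    unfolding fpow_split by (simp add: algebra_simps)
  finally show ?thesis unfolding FF_mult by (simp add: algebra_simps)
qed

lemma g_FF_deriv: "g * fps_deriv FF = of_nat v0 * (FF - 1)"
proof -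
  have "g * fps_deriv FF = - (of_nat v0 * (g * fps_deriv f) * f ^ (v0 - 1)) * FF ^ 2"
    unfolding FF_deriv by (simp add: algebra_simps)
  also have "\<dots> = - (of_nat v0 * (f ^ (v0 - 1) * f) * (f ^ v0 - 1)) * FF ^ 2"
    unfolding g_mult by (simp add: algebra_simps)
  also have "\<dots> = - (of_nat v0 * (FF * f ^ v0) * (FF * f ^ v0 - FF))"
    unfolding fpow_split by (simp add: algebra_simps power2_eq_square)
  finally show ?thesis unfolding FF_mult by (simp add: algebra_simps)
qed

end


context Gset begin

definition B where "B = fps_in_y (FF - 1)"

lemma B0: "B $ 0 = 0" unfolding B_def using FF0 by simp

lemma onepB: "1 + B = fps_in_y FF"
  unfolding B_def fps_in_y_diff fps_in_y_1 by simp

lemma dB: "fps_deriv B = fps_in_y (fps_deriv FF)"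
  unfolding B_def fps_in_y_deriv by simp

definition Phi where "Phi u = Cu v0 g u oo B"

lemma Phi_add: "Phi (u + w) = Phi u + Phi w"
  unfolding Phi_def Cu_add[OF v0pos] fps_compose_add_distrib ..

lemma Phi_mult: "Phi (u * w) = Phi u * Phi w"
  unfolding Phi_def Cu_mult[OF v0pos] fps_compose_mult_distrib[OF B0] ..

lemma Phi_const: "Phi (fps_const a) = fps_const (fps_const a)"
  unfolding Phi_def Cu_const[OF v0pos] by simp

lemma Phi_1: "Phi 1 = 1"
  unfolding Phi_def Cu_1[OF v0pos] by simp

lemma Phi_power: "Phi (u ^ n) = Phi u ^ n"
  by (induction n) (simp_all add: Phi_1 Phi_mult)

lemma Phi_sum: "Phi (sum h S) = (\<Sum>i\<in>S. Phi (h i))"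
  unfolding Phi_def Cu_sum[OF v0pos] fps_compose_sum_distrib ..

definition ypde where
  "ypde Z \<longleftrightarrow> fps_in_y f * fps_deriv Z = fps_const g * fps_in_y (fps_deriv f) * fps_deriv_x Z"

lemma const_compose_mult: "(fps_const c * A) oo B = fps_const c * (A oo B)"
  by (simp add: fps_compose_mult_distrib[OF B0])

lemma ypde_Phi: "ypde (Phi u)"
proof -
  define A where "A = Cu v0 g u"
  define P where "P = fps_deriv A oo B"
  have t: "fps_const g * fps_deriv_x A + of_nat v0 * ((1 + fps_X) * fps_deriv A) = 0"
    using tpde_Cu[OF v0pos] unfolding A_def tpde_def by blast
  have "(fps_const g * fps_deriv_x A + of_nat v0 * ((1 + fps_X) * fps_deriv A)) oo B = 0"
    unfolding t by simp
  then have "fps_const g * (fps_deriv_x A oo B) + fps_const (of_nat v0) * ((1 + B) * P) = 0"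
    unfolding fps_compose_add_distrib fps_of_nat[symmetric] const_compose_mult
      fps_compose_mult_distrib[OF B0] P_def
    by (simp add: B0 fps_compose_add_distrib)
  then have e1: "fps_const g * (fps_deriv_x A oo B) = - (fps_const (of_nat v0) * (fps_in_y FF * P))"
    unfolding onepB by (simp add: eq_neg_iff_add_eq_0)
  have e2: "fps_in_y f * fps_in_y (fps_deriv FF) = - (fps_const (of_nat v0) * fps_in_y FF * fps_in_y (fps_deriv f))"
    unfolding fps_in_y_mult[symmetric] f_FF_deriv fps_in_y_uminus
    by (simp add: fps_in_y_mult fps_in_y_ofnat fps_of_nat)
  have "fps_in_y f * fps_deriv (A oo B) = (fps_in_y f * fps_in_y (fps_deriv FF)) * P"
    unfolding fps_compose_deriv[OF B0] dB P_def by (simp add: algebra_simps)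
  also have "\<dots> = fps_in_y (fps_deriv f) * (- (fps_const (of_nat v0) * (fps_in_y FF * P)))"
    unfolding e2 by (simp add: algebra_simps)
  also have "\<dots> = fps_const g * fps_in_y (fps_deriv f) * fps_deriv_x (A oo B)"
    unfolding e1[symmetric] B_def dx_compose_in_y by (simp add: algebra_simps)
  finally show ?thesis unfolding ypde_def Phi_def A_def .
qed

lemma ypde_diff: "ypde Z1 \<Longrightarrow> ypde Z2 \<Longrightarrow> ypde (Z1 - Z2)"
  unfolding ypde_def by (simp add: dx_diff algebra_simps)

lemma ypde_zero:
  assumes "ypde Z" "Z $ 0 = 0" shows "Z = 0"
proof -
  have "\<forall>m\<le>n. Z $ m = 0" for n
  proof (induction n)
    case 0 then show ?case using assms(2) by simp
  next
    case (Suc n)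
    have l: "(fps_in_y f * fps_deriv Z) $ n = of_nat (Suc n) * Z $ Suc n"
    proof -
      have "(fps_in_y f * fps_deriv Z) $ n = (\<Sum>i=0..n. fps_const (f $ i) * (of_nat (n - i + 1) * Z $ (n - i + 1)))"
        by (simp add: fps_mult_nth)
      also have "\<dots> = fps_const (f $ 0) * (of_nat (n + 1) * Z $ (n + 1)) + (\<Sum>i=Suc 0..n. fps_const (f $ i) * (of_nat (n - i + 1) * Z $ (n - i + 1)))"
        by (simp add: sum.atLeast_Suc_atMost)
      also have "(\<Sum>i=Suc 0..n. fps_const (f $ i) * (of_nat (n - i + 1) * Z $ (n - i + 1))) = 0"
        using Suc.IH by (intro sum.neutral) auto
      finally show ?thesis using f0 by simp
    qed
    have r: "(fps_const g * fps_in_y (fps_deriv f) * fps_deriv_x Z) $ n = 0"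
      using Suc.IH by (simp add: fps_mult_nth mult.assoc)
    have "of_nat (Suc n) * Z $ Suc n = 0" using assms(1) l r unfolding ypde_def by metis
    then have "fps_const (of_nat (Suc n)) * Z $ Suc n = 0" by (simp only: fps_of_nat)
    moreover have "fps_const (of_nat (Suc n) :: 'a) \<noteq> 0"
      by (simp only: fps_const_eq_0_iff of_nat_eq_0_iff)
    ultimately have "Z $ Suc n = 0" by (simp only: mult_eq_0_iff) blast
    then show ?case using Suc.IH le_Suc_eq by auto
  qed
  then show ?thesis by (metis fps_ext fps_zero_nth order_refl)
qed

lemma ypde_unique: "ypde Z1 \<Longrightarrow> ypde Z2 \<Longrightarrow> Z1 $ 0 = Z2 $ 0 \<Longrightarrow> Z1 = Z2"
  using ypde_zero[of "Z1 - Z2"] ypde_diff by simp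

lemma G_eq:
  assumes "is_G v0 f G" shows "G = Phi fps_X"
proof -
  have "ypde G" using assms unfolding is_G_def ypde_def g_def by (simp add: algebra_simps)
  moreover have "G $ 0 = Phi fps_X $ 0" using assms unfolding is_G_def Phi_def by simp
  ultimately show ?thesis using ypde_unique ypde_Phi by blast
qed

end


lemma inner_dvd_mult:
  fixes A B :: "'a::idom fps fps"
  assumes "\<forall>v. fps_X ^ a dvd A $ v" "\<forall>v. fps_X ^ b dvd B $ v"
  shows "\<forall>v. fps_X ^ (a + b) dvd (A * B) $ v"
  using assms by (auto simp: fps_mult_nth power_add intro!: dvd_sum mult_dvd_mono)

lemma inner_dvd_power:
  fixes A :: "'a::idom fps fps"
  assumes "\<forall>v. fps_X dvd A $ v"
  shows "\<forall>v. fps_X ^ h dvd (A ^ h) $ v"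
proof (induction h)
  case 0 then show ?case by simp
next
  case (Suc h)
  have "\<forall>v. fps_X ^ (1 + h) dvd (A * A ^ h) $ v"
    using assms Suc by (intro inner_dvd_mult) auto
  then show ?case by simp
qed

context Gset begin

definition C where "C = Cu v0 g fps_X"

lemma cuX0: "cu v0 g fps_X n $ 0 = 0"
  by (induction n) (simp_all add: g0 fps_of_nat[symmetric])

lemma PhiX0: "Phi fps_X $ v $ 0 = 0"
  unfolding Phi_def by (simp add: fps_compose_nth fps_sum_nth cuX0)

lemma PhiX_dvd: "\<forall>v. fps_X ^ h dvd (Phi fps_X ^ h) $ v"
proof -
  have "\<forall>v. fps_X dvd Phi fps_X $ v"
    using PhiX0 xpow_dvd_iff[of 1] by auto
  then show ?thesis by (rule inner_dvd_power)
qed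

lemma trunc:
  "Phi u $ a $ i = (\<Sum>h\<le>i. u $ h * (Phi fps_X ^ h) $ a $ i)"
proof -
  define p where "p = (\<Sum>h\<le>i. fps_const (u $ h) * fps_X ^ h)"
  define w where "w = fps_shift (Suc i) u"
  have pn: "p $ n = (if n \<le> i then u $ n else 0)" for n
  proof -
    have "p $ n = (\<Sum>k\<le>i. if n = k then u $ n else 0)"
      unfolding p_def fps_sum_nth by (rule sum.cong) auto
    then show ?thesis by (simp add: sum.delta)
  qed
  have u: "u = p + fps_X ^ Suc i * w"
    by (rule fps_ext) (simp add: pn fps_X_power_mult_nth w_def del: power_Suc)
  have "Phi u = (\<Sum>h\<le>i. fps_const (fps_const (u $ h)) * Phi fps_X ^ h) + Phi fps_X ^ Suc i * Phi w"
    by (subst u) (simp add: p_def Phi_add Phi_sum Phi_mult Phi_const Phi_power)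
  moreover have "(Phi fps_X ^ Suc i * Phi w) $ a $ i = 0"
  proof -
    have "\<forall>v. fps_X ^ (Suc i + 0) dvd (Phi fps_X ^ Suc i * Phi w) $ v"
      using PhiX_dvd[of "Suc i"] by (intro inner_dvd_mult) (auto simp del: power_Suc)
    then have "fps_X ^ Suc i dvd (Phi fps_X ^ Suc i * Phi w) $ a" by simp
    then show ?thesis unfolding xpow_dvd_iff by blast
  qed
  ultimately show ?thesis by (simp add: fps_sum_nth)
qed

definition Ialt :: "'a fps fps" where "Ialt = Abs_fps (\<lambda>n. fps_const ((-1) ^ n))"

lemma ring_aux3:
  fixes k :: "'b::comm_ring_1"
  shows "k*(a*s) + k*((1 + n)*(a*(-s)) + n*(a*s)) = 0"
  by (simp add: algebra_simps)

lemma tpde_FF: "tpde v0 g (fps_const (FF - 1) * Ialt)"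
  unfolding tpde_coeff
proof
  fix n
  define s :: "'a fps" where "s = fps_const ((-1) ^ n)"
  have e0: "(fps_const (FF - 1) * Ialt) $ n = (FF - 1) * s" by (simp add: Ialt_def s_def)
  have e1: "(fps_const (FF - 1) * Ialt) $ Suc n = (FF - 1) * (- s)" by (simp add: Ialt_def s_def)
  have d: "g * fps_deriv ((FF - 1) * s) = of_nat v0 * ((FF - 1) * s)"
  proof -
    have "g * fps_deriv ((FF - 1) * s) = (g * fps_deriv FF) * s" by (simp add: s_def mult.assoc)
    then show ?thesis unfolding g_FF_deriv by (simp add: mult.assoc)
  qed
  show "g * fps_deriv ((fps_const (FF - 1) * Ialt) $ n) + of_nat v0 * (of_nat (Suc n) *
     (fps_const (FF - 1) * Ialt) $ Suc n + of_nat n * (fps_const (FF - 1) * Ialt) $ n) = 0"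
    unfolding e0 e1 d of_nat_Suc by (rule ring_aux3)
qed

lemma Ialt_inv: "(1 + fps_X) * Ialt = 1"
proof (rule fps_ext)
  fix n show "((1 + fps_X) * Ialt) $ n = (1 :: 'a fps fps) $ n"
    by (cases n) (simp_all add: Ialt_def distrib_right fps_X_mult_nth)
qed

lemma Cu_FF: "Cu v0 g (FF - 1) = fps_const (FF - 1) * Ialt"
proof -
  have "fps_const (FF - 1) * Ialt = Cu v0 g ((fps_const (FF - 1) * Ialt) $ 0)"
    by (rule tpde_unique[OF v0pos tpde_FF])
  then show ?thesis by (simp add: Ialt_def)
qed

lemma onepX_compose: "(1 + fps_X) oo B = fps_in_y FF"
  using onepB by (simp add: fps_compose_add_distrib B0)

lemma Phi_FF: "Phi (FF - 1) * fps_in_y FF = fps_const (FF - 1)"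
proof -
  have "Phi (FF - 1) * fps_in_y FF = (fps_const (FF - 1) * ((1 + fps_X) * Ialt)) oo B"
    unfolding Phi_def Cu_FF onepX_compose[symmetric] fps_compose_mult_distrib[OF B0]
    by (simp add: algebra_simps)
  then show ?thesis unfolding Ialt_inv by simp
qed

end


lemma pfrak_pow: "pfrak G w u v = ((G ^ w) $ v) $ u"
proof (induction w arbitrary: u v rule: less_induct)
  case (less w)
  show ?case
  proof (cases w)
    case 0 then show ?thesis by simp
  next
    case (Suc w')
    show ?thesis
    proof (cases w')
      case 0 then show ?thesis using Suc by simp
    next
      case (Suc w'')
      have IH: "pfrak G (Suc w'') a b = ((G ^ Suc w'') $ b) $ a" for a b
        using less Suc \<open>w = Suc w'\<close> by simp
      have "pfrak G w u v = (\<Sum>u1\<le>u. \<Sum>v1\<le>v. G $ v1 $ u1 * (G ^ Suc w'') $ (v - v1) $ (u - u1))"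
        using Suc \<open>w = Suc w'\<close> IH by simp
      also have "\<dots> = (\<Sum>v1\<le>v. \<Sum>u1\<le>u. G $ v1 $ u1 * (G ^ Suc w'') $ (v - v1) $ (u - u1))"
        by (rule sum.swap)
      also have "\<dots> = ((G * G ^ Suc w'') $ v) $ u"
        by (simp add: fps_mult_nth fps_sum_nth atLeast0AtMost)
      finally show ?thesis using Suc \<open>w = Suc w'\<close> by simp
    qed
  qed
qed

definition ext :: "nat \<Rightarrow> 'a::comm_ring_1 fps fps \<Rightarrow> 'a fps" where
  "ext i Z = Abs_fps (\<lambda>a. Z $ a $ i)"

lemma ext_nth [simp]: "ext i Z $ a = Z $ a $ i" by (simp add: ext_def)

lemma ext_mult_in_y: "ext i (fps_in_y p * Z) = p * ext i Z"
  by (rule fps_ext) (simp add: fps_mult_nth[of "fps_in_y p"] fps_mult_nth[of p] fps_sum_nth)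

lemma ext_const: "ext k (fps_const c) = fps_const (c $ k)"
  by (rule fps_ext) simp

lemma ext_conv: "(\<Sum>a\<le>j. X $ a $ i * Y $ (j - a) $ k) = (ext i X * ext k Y) $ j"
  by (simp add: fps_mult_nth atLeast0AtMost)

lemma onepX_in_y: "(1 + fps_X :: 'a::comm_ring_1 fps fps) = fps_in_y (1 + fps_X)"
  by (rule fps_ext) simp

lemma ring_aux4:
  fixes g :: "'b::comm_ring_1"
  assumes "p * Q' = r * Q"
  shows "g*(Q*x) + v*(p*(Q*z + Q'*Z)) = Q*(g*x + v*(p*z) + (v*r)*Z)"
proof -
  have "g*(Q*x) + v*(p*(Q*z + Q'*Z)) = Q*(g*x) + v*(p*Q*z) + v*((p*Q')*Z)"
    by (simp add: algebra_simps)
  also have "\<dots> = Q*(g*x + v*(p*z) + (v*r)*Z)" unfolding assms by (simp add: algebra_simps)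
  finally show ?thesis .
qed

lemma ring_aux5:
  fixes g :: "'b::comm_ring_1"
  assumes "g*d + v*(n1*c1 + N*c) = 0" "m1*b1 = n1*b" "N = m + r"
  shows "g*(b*d) + v*(m1*(b1*c1) + m*(b*c)) + (v*r)*(b*c) = 0"
proof -
  have "g*(b*d) + v*(m1*(b1*c1) + m*(b*c)) + (v*r)*(b*c)
      = b*(g*d + v*(n1*c1 + N*c)) + v*c1*(m1*b1 - n1*b) + v*b*c*(m + r - N)"
    by (simp add: algebra_simps)
  then show ?thesis using assms by simp
qed

context Gset begin

definition mpde where
  "mpde R Z \<longleftrightarrow> fps_const g * fps_deriv_x Z + of_nat v0 * ((1 + fps_X) * fps_deriv Z) + of_nat (v0 * R) * Z = 0"

lemma mpde_coeff:
  "mpde R Z \<longleftrightarrow> (\<forall>n. g * fps_deriv (Z $ n) + of_nat v0 * (of_nat (Suc n) * Z $ Suc n + of_nat n * Z $ n)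
      + of_nat (v0 * R) * Z $ n = 0)"
  unfolding mpde_def fps_eq_iff
  by (simp add: onepX_deriv_nth ofnat_mult_nth del: of_nat_Suc of_nat_mult)

lemma tpde_mpde:
  assumes "mpde R Z" shows "tpde v0 g ((1 + fps_X) ^ R * Z)"
proof -
  define Q :: "'a fps fps" where "Q = (1 + fps_X) ^ R"
  have dQ: "fps_deriv_x Q = 0" unfolding Q_def onepX_in_y fps_in_y_power[symmetric] dx_in_y ..
  have pQ: "(1 + fps_X) * fps_deriv Q = of_nat R * Q"
  proof (cases R)
    case 0 then show ?thesis by (simp add: Q_def)
  next
    case (Suc r)
    have "fps_deriv ((1 + fps_X) ^ Suc r :: 'a fps fps) = of_nat (Suc r) * (1 + fps_X) ^ r"
      using fps_deriv_power'[of "1 + fps_X :: 'a fps fps" "Suc r"] by simp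
    then have "(1 + fps_X) * fps_deriv ((1 + fps_X) ^ Suc r :: 'a fps fps) = of_nat (Suc r) * (1 + fps_X) ^ Suc r"
      by (simp only: mult.left_commute power_Suc)
    then show ?thesis using Suc by (simp only: Q_def)
  qed
  have "fps_const g * fps_deriv_x (Q * Z) + of_nat v0 * ((1 + fps_X) * fps_deriv (Q * Z))
      = fps_const g * (Q * fps_deriv_x Z) + of_nat v0 * ((1 + fps_X) * (Q * fps_deriv Z + fps_deriv Q * Z))"
    by (simp add: dx_mult dQ)
  also have "\<dots> = Q * (fps_const g * fps_deriv_x Z + of_nat v0 * ((1 + fps_X) * fps_deriv Z) + (of_nat v0 * of_nat R) * Z)"
    by (rule ring_aux4[OF pQ])
  also have "\<dots> = 0" using assms unfolding mpde_def by simp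
  finally show ?thesis unfolding tpde_def Q_def .
qed

definition Ds where "Ds R = Abs_fps (\<lambda>m. of_nat ((m + R) choose m) * C $ (m + R))"

lemma tpdeC: "tpde v0 g C" unfolding C_def by (rule tpde_Cu[OF v0pos])

lemma deriv_ofnat_mult: "fps_deriv (of_nat k * (c :: 'a fps)) = of_nat k * fps_deriv c"
  by (simp add: fps_of_nat[symmetric])

lemma mpde_Ds: "mpde R (Ds R)"
  unfolding mpde_coeff
proof
  fix m
  define N where "N = m + R"
  have T: "g * fps_deriv (C $ N) + of_nat v0 * (of_nat (Suc N) * C $ Suc N + of_nat N * C $ N) = 0"
    using tpdeC unfolding tpde_coeff by blast
  have binn: "Suc m * (Suc m + R choose Suc m) = Suc N * (m + R choose m)"
    using Suc_times_binomial_eq[of "m + R" m] unfolding N_def by simp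
  have bin: "(of_nat (Suc m) :: 'a fps) * of_nat (Suc m + R choose Suc m) = of_nat (Suc N) * of_nat (m + R choose m)"
    using arg_cong[OF binn, of "of_nat :: nat \<Rightarrow> 'a fps"] by (simp only: of_nat_mult)
  have NN: "(of_nat N :: 'a fps) = of_nat m + of_nat R" unfolding N_def by simp
  have "g * (of_nat (m + R choose m) * fps_deriv (C $ N)) +
      of_nat v0 * (of_nat (Suc m) * (of_nat (Suc m + R choose Suc m) * C $ Suc N) + of_nat m * (of_nat (m + R choose m) * C $ N)) +
      (of_nat v0 * of_nat R) * (of_nat (m + R choose m) * C $ N) = 0"
    by (rule ring_aux5[OF T bin NN])
  then show "g * fps_deriv (Ds R $ m) + of_nat v0 * (of_nat (Suc m) * Ds R $ Suc m + of_nat m * Ds R $ m) +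
      of_nat (v0 * R) * Ds R $ m = 0"
    unfolding Ds_def N_def by (simp add: deriv_ofnat_mult del: of_nat_Suc)
qed

lemma Cu_CR: "Cu v0 g (C $ R) = (1 + fps_X) ^ R * Ds R"
proof -
  have "(1 + fps_X) ^ R * Ds R = Cu v0 g (((1 + fps_X) ^ R * Ds R) $ 0)"
    by (rule tpde_unique[OF v0pos tpde_mpde[OF mpde_Ds]])
  then show ?thesis by (simp add: Ds_def fps_power_zeroth)
qed

lemma Phi_CR: "Phi (C $ R) = fps_in_y (FF ^ R) * (Ds R oo B)"
  unfolding Phi_def Cu_CR fps_compose_mult_distrib[OF B0] fps_compose_power[OF B0, symmetric]
    onepX_compose fps_in_y_power ..

end


lemma binom_sym: "(m + R choose m) = (R + m choose R)"
  using binomial_symmetric[of m "m + R"] by (simp add: add.commute)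

lemma swap_aux: "(\<Sum>h\<in>H. \<Sum>l\<in>L. (A h :: 'b::comm_semiring_1) * B l * Q l h) = (\<Sum>l\<in>L. B l * (\<Sum>h\<in>H. Q l h * A h))"
  by (subst sum.swap) (simp add: sum_distrib_left mult_ac)

lemma swap_aux2: "(\<Sum>l\<in>L. (B l :: 'b::comm_semiring_1) * (\<Sum>r\<in>S. a l r * Y r)) = (\<Sum>r\<in>S. Y r * (\<Sum>l\<in>L. a l r * B l))"
proof -
  have "(\<Sum>l\<in>L. B l * (\<Sum>r\<in>S. a l r * Y r)) = (\<Sum>l\<in>L. \<Sum>r\<in>S. B l * (a l r * Y r))"
    by (simp add: sum_distrib_left)
  also have "\<dots> = (\<Sum>r\<in>S. \<Sum>l\<in>L. B l * (a l r * Y r))" by (rule sum.swap)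
  also have "\<dots> = (\<Sum>r\<in>S. Y r * (\<Sum>l\<in>L. a l r * B l))" by (simp add: sum_distrib_left mult_ac)
  finally show ?thesis .
qed

context Gset begin

definition al where "al l R = ((FF - 1) ^ R) $ l"

lemma al_zero: "l < R \<Longrightarrow> al l R = 0"
proof -
  assume lR: "l < R"
  have "fps_X ^ 1 dvd FF - 1" unfolding xpow_dvd_iff using FF0 by simp
  then have "fps_X ^ R dvd (FF - 1) ^ R" using dvd_power_same by fastforce
  then show ?thesis unfolding al_def xpow_dvd_iff using lR by blast
qed

lemma Bpow: "B ^ i = fps_in_y ((FF - 1) ^ i)" unfolding B_def fps_in_y_power ..

lemma L0: "l \<le> k \<Longrightarrow> Phi fps_X $ l $ h = (\<Sum>R\<le>k. (C $ R) $ h * al l R)"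
proof -
  assume lk: "l \<le> k"
  have "Phi fps_X $ l $ h = (\<Sum>R=0..l. (C $ R) $ h * al l R)"
    unfolding Phi_def C_def[symmetric] fps_compose_nth Bpow by (simp add: fps_sum_nth al_def)
  also have "\<dots> = (\<Sum>R\<le>k. (C $ R) $ h * al l R)"
    using lk by (intro sum.mono_neutral_left) (auto simp: al_zero)
  finally show ?thesis .
qed

lemma L1: "l \<le> k \<Longrightarrow> (\<Sum>h\<le>i. Phi fps_X $ l $ h * (Phi fps_X ^ h) $ a $ i) = (\<Sum>R\<le>k. al l R * Phi (C $ R) $ a $ i)"
proof -
  assume lk: "l \<le> k"
  have "(\<Sum>h\<le>i. Phi fps_X $ l $ h * (Phi fps_X ^ h) $ a $ i)
      = (\<Sum>h\<le>i. \<Sum>R\<le>k. al l R * ((C $ R) $ h * (Phi fps_X ^ h) $ a $ i))"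
    unfolding L0[OF lk] by (intro sum.cong refl) (simp add: sum_distrib_left sum_distrib_right mult_ac)
  also have "\<dots> = (\<Sum>R\<le>k. al l R * (\<Sum>h\<le>i. (C $ R) $ h * (Phi fps_X ^ h) $ a $ i))"
    by (subst sum.swap) (simp add: sum_distrib_left)
  also have "\<dots> = (\<Sum>R\<le>k. al l R * Phi (C $ R) $ a $ i)"
    by (simp add: trunc[of "C $ _"])
  finally show ?thesis .
qed

lemma L2: "(\<Sum>l\<le>k. al l R * (Phi fps_X ^ l) $ b $ k) = Phi ((FF - 1) ^ R) $ b $ k"
  unfolding trunc[of "(FF - 1) ^ R"] al_def ..

lemma L3: "(\<Sum>a\<le>j. Phi (C $ R) $ a $ i * Phi ((FF - 1) ^ R) $ (j - a) $ k) = al k R * (Ds R oo B) $ j $ i"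
proof -
  define M where "M = Ds R oo B"
  define P where "P = Phi (FF - 1) ^ R"
  have P1: "fps_in_y (FF ^ R) * P = fps_const ((FF - 1) ^ R)"
    unfolding P_def fps_in_y_power power_mult_distrib[symmetric] mult.commute[of "fps_in_y FF"] Phi_FF
    by simp
  have "(\<Sum>a\<le>j. Phi (C $ R) $ a $ i * Phi ((FF - 1) ^ R) $ (j - a) $ k)
      = (ext i (fps_in_y (FF ^ R) * M) * ext k P) $ j"
    unfolding ext_conv Phi_CR M_def P_def Phi_power ..
  also have "ext i (fps_in_y (FF ^ R) * M) * ext k P = ext i M * ext k (fps_in_y (FF ^ R) * P)"
    unfolding ext_mult_in_y by (simp add: mult_ac)
  also have "\<dots> = ext i M * fps_const (al k R)"
    unfolding P1 ext_const al_def ..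
  finally show ?thesis unfolding M_def by simp
qed

lemma L4: "(Ds R oo B) $ j $ i = (\<Sum>m\<le>j. al j m * (of_nat (m + R choose m) * (C $ (m + R)) $ i))"
  unfolding fps_compose_nth Bpow
  by (simp add: fps_sum_nth al_def Ds_def atLeast0AtMost fps_of_nat[symmetric] mult_ac)

definition symv where
  "symv i j k = (\<Sum>R\<le>k. \<Sum>m\<le>j. al k R * (al j m * (of_nat (m + R choose m) * (C $ (m + R)) $ i)))"

lemma symv_sym: "symv i j k = symv i k j"
proof -
  have "symv i k j = (\<Sum>m\<le>k. \<Sum>R\<le>j. al j R * (al k m * (of_nat (m + R choose m) * (C $ (m + R)) $ i)))"
    unfolding symv_def by (rule sum.swap)
  also have "\<dots> = symv i j k"
    unfolding symv_def
  proof (intro sum.cong refl)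
    fix x y
    show "al j y * (al k x * (of_nat (x + y choose x) * C $ (x + y) $ i)) =
          al k x * (al j y * (of_nat (y + x choose y) * C $ (y + x) $ i))"
    proof -
      have b: "(x + y choose x) = (y + x choose y)" by (rule binom_sym)
      have c: "x + y = y + x" by simp
      show ?thesis unfolding b unfolding c by (simp add: mult_ac)
    qed
  qed
  finally show ?thesis by simp
qed

lemma main:
  "(\<Sum>a\<le>j. \<Sum>h\<le>i. \<Sum>l\<le>k. (Phi fps_X ^ h) $ a $ i * (Phi fps_X ^ l) $ (j - a) $ k * Phi fps_X $ l $ h)
   = symv i j k"
proof -
  let ?P = "\<lambda>h a i. (Phi fps_X ^ h) $ a $ i"
  have "(\<Sum>a\<le>j. \<Sum>h\<le>i. \<Sum>l\<le>k. ?P h a i * ?P l (j - a) k * Phi fps_X $ l $ h)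
      = (\<Sum>a\<le>j. \<Sum>l\<le>k. ?P l (j - a) k * (\<Sum>h\<le>i. Phi fps_X $ l $ h * ?P h a i))"
    by (rule sum.cong[OF refl]) (rule swap_aux)
  also have "\<dots> = (\<Sum>a\<le>j. \<Sum>l\<le>k. ?P l (j - a) k * (\<Sum>R\<le>k. al l R * Phi (C $ R) $ a $ i))"
    by (intro sum.cong refl) (simp add: L1)
  also have "\<dots> = (\<Sum>a\<le>j. \<Sum>R\<le>k. Phi (C $ R) $ a $ i * (\<Sum>l\<le>k. al l R * ?P l (j - a) k))"
    by (rule sum.cong[OF refl]) (rule swap_aux2)
  also have "\<dots> = (\<Sum>a\<le>j. \<Sum>R\<le>k. Phi (C $ R) $ a $ i * Phi ((FF - 1) ^ R) $ (j - a) $ k)"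
    by (simp add: L2)
  also have "\<dots> = (\<Sum>R\<le>k. \<Sum>a\<le>j. Phi (C $ R) $ a $ i * Phi ((FF - 1) ^ R) $ (j - a) $ k)"
    by (rule sum.swap)
  also have "\<dots> = symv i j k"
    unfolding symv_def L3 L4 by (simp add: sum_distrib_left)
  finally show ?thesis .
qed

end

theorem theorem3p2:
  fixes f :: "'a::{alg_closed_field, field_char_0} fps"
    and G :: "'a fps fps"
    and v0 :: nat
  assumes "v0 \<ge> 1"
    and "f $ 0 = 1"
    and "\<And>n. 0 < n \<Longrightarrow> n < v0 \<Longrightarrow> f $ n = 0"
    and "f $ v0 = 1"
    and "is_G v0 f G"
  shows "\<forall>i j k.
    (\<Sum>a\<le>j. \<Sum>h\<le>i. \<Sum>l\<le>k. pfrak G h i a * pfrak G l k (j - a) * pfrak G 1 h l)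
  = (\<Sum>c\<le>k. \<Sum>h\<le>i. \<Sum>l\<le>j. pfrak G h i c * pfrak G l j (k - c) * pfrak G 1 h l)"
proof -
  interpret Gset v0 f using assms(1-4) by unfold_locales auto
  have G: "G = Phi fps_X" by (rule G_eq[OF assms(5)])
  have L: "(\<Sum>a\<le>j. \<Sum>h\<le>i. \<Sum>l\<le>k. pfrak G h i a * pfrak G l k (j - a) * pfrak G 1 h l) = symv i j k"
    for i j k
    using main[of i j k] by (simp add: pfrak_pow G)
  show ?thesis using L symv_sym by simp
qed

end
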